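(* There is a constant $C$ such that for every $N\ge 1$ and every nonempty submatrix $B$ of an $N\times N$ matrix, the quadtree over the $N\times N$ matrix satisfies $|I(B)|\le CN$; that is, $|I(B)|=O(N)$.
   Context: The quadtree over an $N\times N$ matrix (coordinates $\{0,\dots,N-1\}^2$) is the rooted tree of nodes defined as follows. Each node covers a submatrix $[x_0,x_1][y_0,y_1]=\{(x,y):x_0\le x\le x_1,\ y_0\le y\le y_1\}$. The root covers $[0,N-1][0,N-1]$. A node covering $[x_0,x_1][y_0,y_1]$ with more than one element has as children the nodes covering those of the four submatrices $[x_0,x_m][y_0,y_m]$, $[x_m+1,x_1][y_0,y_m]$, $[x_0,x_m][y_m+1,y_1]$, $[x_m+1,x_1][y_m+1,y_1]$ that are nonempty, where $x_m=\lfloor(x_0+x_1)/2\rfloor$, $y_m=\lfloor(y_0+y_1)/2\rfloor$; nodes covering one element have no children. For a submatrix $B$, $S(B)$ denotes the smallest set of mutually disjoint quadtree nodes whose union is $B$ (the inclusion-maximal nodes contained in $B$), and $I(B)=\bigcup_{n\in S(B)}\{m: m \text{ a quadtree node with } m\supseteq n\}$. *)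

theory Defs
  imports Complex_Main
begin

text \<open>A rectangle (x0, x1, y0, y1) denotes the submatrix [x0,x1][y0,y1].
  Quadtree nodes are identified with the submatrices they cover (distinct nodes
  cover distinct submatrices).\<close>

type_synonym rect = "nat \<times> nat \<times> nat \<times> nat"

definition cells :: "rect \<Rightarrow> (nat \<times> nat) set" where
  "cells r = (case r of (x0, x1, y0, y1) \<Rightarrow>
      {(x, y). x0 \<le> x \<and> x \<le> x1 \<and> y0 \<le> y \<and> y \<le> y1})"

inductive_set qnode :: "nat \<Rightarrow> rect set" for N :: nat where
  root: "1 \<le> N \<Longrightarrow> (0, N - 1, 0, N - 1) \<in> qnode N"
| child: "\<lbrakk> (x0, x1, y0, y1) \<in> qnode N;
            x0 < x1 \<or> y0 < y1;
            (a0, a1) \<in> {(x0, (x0 + x1) div 2), ((x0 + x1) div 2 + 1, x1)};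
            (b0, b1) \<in> {(y0, (y0 + y1) div 2), ((y0 + y1) div 2 + 1, y1)};
            a0 \<le> a1; b0 \<le> b1 \<rbrakk>
          \<Longrightarrow> (a0, a1, b0, b1) \<in> qnode N"

definition qS :: "nat \<Rightarrow> (nat \<times> nat) set \<Rightarrow> rect set" where
  "qS N B = {n \<in> qnode N. cells n \<subseteq> B \<and>
      (\<forall>m \<in> qnode N. cells n \<subseteq> cells m \<and> cells m \<subseteq> B \<longrightarrow> m = n)}"

definition qI :: "nat \<Rightarrow> (nat \<times> nat) set \<Rightarrow> rect set" where
  "qI N B = {m \<in> qnode N. \<exists>n \<in> qS N B. cells n \<subseteq> cells m}"

end

theory Submission
  imports Defs
begin

fun ch :: "nat \<times> nat \<Rightarrow> (nat \<times> nat) set" where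
  "ch (a, b) = (if a < b then {(a, (a+b) div 2), ((a+b) div 2 + 1, b)} else {(a, b)})"

primrec iv :: "nat \<Rightarrow> nat \<Rightarrow> (nat \<times> nat) set" where
  "iv N 0 = {(0, N - 1)}"
| "iv N (Suc j) = \<Union>(ch ` iv N j)"

lemma ch_card: "finite (ch X) \<and> card (ch X) \<le> 2"
  by (cases X) (auto simp: card_insert_le)

lemma iv_card: "finite (iv N j) \<and> card (iv N j) \<le> 2 ^ j"
proof (induction j)
  case 0 then show ?case by simp
next
  case (Suc j)
  have f: "finite (iv N (Suc j))" using Suc ch_card by simp
  have "card (iv N (Suc j)) \<le> (\<Sum>X\<in>iv N j. card (ch X))"
    by (simp add: card_UN_le Suc)
  also have "\<dots> \<le> (\<Sum>X\<in>iv N j. 2)" by (rule sum_mono) (simp add: ch_card)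
  also have "\<dots> \<le> 2 * 2 ^ j" using Suc by simp
  finally show ?case using f by simp
qed

lemma iv_len: "(a, b) \<in> iv N j \<Longrightarrow> 1 \<le> N \<Longrightarrow> a \<le> b \<and> b < N \<and> (b - a) * 2 ^ j < N"
proof (induction j arbitrary: a b)
  case 0 then show ?case by auto
next
  case (Suc j)
  then obtain c d where cd: "(c, d) \<in> iv N j" "(a, b) \<in> ch (c, d)" by auto
  have IH: "c \<le> d \<and> d < N \<and> (d - c) * 2 ^ j < N" using Suc cd by blast
  show ?case
  proof (cases "c < d")
    case True
    have k: "((d - c) div 2) * 2 ^ Suc j \<le> (d - c) * 2 ^ j"
    proof -
      have "((d - c) div 2) * 2 ^ Suc j = ((d - c) div 2 * 2) * 2 ^ j" by simp
      also have "\<dots> \<le> (d - c) * 2 ^ j" by (rule mult_le_mono1) simp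
      finally show ?thesis .
    qed
    have "b - a \<le> (d - c) div 2" using cd True by auto
    then have "(b - a) * 2 ^ Suc j \<le> ((d - c) div 2) * 2 ^ Suc j" by (rule mult_le_mono1)
    then have m: "(b - a) * 2 ^ Suc j < N" using k IH by linarith
    have "a \<le> b \<and> b < N" using cd True IH by auto
    then show ?thesis using m by blast
  next
    case False then show ?thesis using cd IH by auto
  qed
qed

lemma iv_disj: "(a, b) \<in> iv N j \<Longrightarrow> (c, d) \<in> iv N j \<Longrightarrow> a \<le> p \<Longrightarrow> p \<le> b \<Longrightarrow> c \<le> p \<Longrightarrow> p \<le> d
   \<Longrightarrow> a = c \<and> b = d"
proof (induction j arbitrary: a b c d)
  case 0 then show ?case by auto
next
  case (Suc j)
  obtain a' b' where A: "(a', b') \<in> iv N j" "(a, b) \<in> ch (a', b')" using Suc.prems by auto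
  obtain c' d' where C: "(c', d') \<in> iv N j" "(c, d) \<in> ch (c', d')" using Suc.prems by auto
  have "a' \<le> p \<and> p \<le> b'" using A Suc.prems by (auto split: if_splits)
  moreover have "c' \<le> p \<and> p \<le> d'" using C Suc.prems by (auto split: if_splits)
  ultimately have "a' = c' \<and> b' = d'" using Suc.IH A C by blast
  then show ?case using A C Suc.prems by (auto split: if_splits)
qed

lemma qnode_iv: "(a, b, c, d) \<in> qnode N \<Longrightarrow> 1 \<le> N \<and> (\<exists>j. (a, b) \<in> iv N j \<and> (c, d) \<in> iv N j)"
proof (induction rule: qnode.induct)
  case root then show ?case by (auto intro: exI[of _ 0])
next
  case (child x0 x1 y0 y1 a0 a1 b0 b1)
  then obtain j where j: "(x0, x1) \<in> iv N j" "(y0, y1) \<in> iv N j" by blast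
  have l1: "x0 \<le> x1" "y0 \<le> y1" using iv_len j child by blast+
  have h1: "(a0, a1) \<in> ch (x0, x1)" using child l1 by auto
  have h2: "(b0, b1) \<in> ch (y0, y1)" using child l1 by auto
  have "(a0, a1) \<in> iv N (Suc j)" unfolding iv.simps using j(1) h1 by blast
  moreover have "(b0, b1) \<in> iv N (Suc j)" unfolding iv.simps using j(2) h2 by blast
  ultimately show ?case using child by blast
qed

lemma qnode_bnd: "(a, b, c, d) \<in> qnode N \<Longrightarrow> a \<le> b \<and> b < N \<and> c \<le> d \<and> d < N"
  using qnode_iv iv_len by blast

lemma qnode_fin: "finite (qnode N)"
proof -
  have "qnode N \<subseteq> {..<N} \<times> {..<N} \<times> {..<N} \<times> {..<N}"
    using qnode_bnd by fastforce
  then show ?thesis by (rule finite_subset) auto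
qed

lemma geo: "(\<Sum>i<n. (2::nat) ^ i) + 1 = 2 ^ n"
  by (induction n) auto

lemma J_fin: fixes N :: nat shows "finite {j::nat. (2::nat) ^ j < N}"
proof -
  have "{j::nat. (2::nat) ^ j < N} \<subseteq> {..<N}"
  proof
    fix j assume "j \<in> {j::nat. (2::nat) ^ j < N}"
    then have "2 ^ j < N" by simp
    then have "j < N" by (rule less_trans[OF less_exp])
    then show "j \<in> {..<N}" by simp
  qed
  then show ?thesis using finite_subset by blast
qed

lemma J_sum: fixes N :: nat shows "(\<Sum>j\<in>{j::nat. (2::nat) ^ j < N}. (2::nat) ^ j) \<le> 2 * N"
proof (cases "{j::nat. (2::nat) ^ j < N} = {}")
  case True then show ?thesis by simp
next
  case False
  define M where "M = Max {j::nat. (2::nat) ^ j < N}"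
  have "M \<in> {j::nat. (2::nat) ^ j < N}" unfolding M_def by (rule Max_in[OF J_fin False])
  then have M: "2 ^ M < N" by simp
  have sub: "{j::nat. (2::nat) ^ j < N} \<subseteq> {..<Suc M}" 
  proof
    fix j assume "j \<in> {j::nat. (2::nat) ^ j < N}"
    then have "j \<le> M" unfolding M_def by (rule Max_ge[OF J_fin])
    then show "j \<in> {..<Suc M}" by simp
  qed
  have "(\<Sum>j\<in>{j::nat. (2::nat) ^ j < N}. (2::nat) ^ j) \<le> (\<Sum>j<Suc M. (2::nat) ^ j)"
    by (rule sum_mono2[OF _ sub]) auto
  also have "\<dots> < 2 ^ Suc M" using geo[of "Suc M"] by linarith
  finally show ?thesis using M by simp
qed

lemma A_card: "card {X \<in> iv N j. fst X \<le> p \<and> p \<le> snd X} \<le> 1"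
proof -
  have f: "finite {X \<in> iv N j. fst X \<le> p \<and> p \<le> snd X}" using iv_card by auto
  show ?thesis unfolding One_nat_def card_le_Suc0_iff_eq[OF f]
    using iv_disj by (auto simp: prod_eq_iff)
qed

lemma cls_sum:
  "(\<Sum>j\<in>{j::nat. (2::nat) ^ j < N}. card ({X \<in> iv N j. fst X \<le> p \<and> p \<le> snd X} \<times> iv N j)) \<le> 2 * N"
  "(\<Sum>j\<in>{j::nat. (2::nat) ^ j < N}. card (iv N j \<times> {X \<in> iv N j. fst X \<le> p \<and> p \<le> snd X})) \<le> 2 * N"
proof -
  have "card ({X \<in> iv N j. fst X \<le> p \<and> p \<le> snd X} \<times> iv N j) \<le> 2 ^ j" for j
  proof -
    have "card {X \<in> iv N j. fst X \<le> p \<and> p \<le> snd X} * card (iv N j) \<le> 1 * 2 ^ j"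
      using A_card[of N j p] iv_card[of N j] by (intro mult_le_mono) auto
    then show ?thesis unfolding card_cartesian_product by simp
  qed
  then have "(\<Sum>j\<in>{j::nat. (2::nat) ^ j < N}. card ({X \<in> iv N j. fst X \<le> p \<and> p \<le> snd X} \<times> iv N j))
     \<le> (\<Sum>j\<in>{j::nat. (2::nat) ^ j < N}. 2 ^ j)" by (rule sum_mono)
  then show "(\<Sum>j\<in>{j::nat. (2::nat) ^ j < N}. card ({X \<in> iv N j. fst X \<le> p \<and> p \<le> snd X} \<times> iv N j)) \<le> 2 * N"
    using J_sum[of N] by linarith
  have "card (iv N j \<times> {X \<in> iv N j. fst X \<le> p \<and> p \<le> snd X}) \<le> 2 ^ j" for j
  proof -
    have "card (iv N j) * card {X \<in> iv N j. fst X \<le> p \<and> p \<le> snd X} \<le> 2 ^ j * 1"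
      using A_card[of N j p] iv_card[of N j] by (intro mult_le_mono) auto
    then show ?thesis unfolding card_cartesian_product by simp
  qed
  then have "(\<Sum>j\<in>{j::nat. (2::nat) ^ j < N}. card (iv N j \<times> {X \<in> iv N j. fst X \<le> p \<and> p \<le> snd X}))
     \<le> (\<Sum>j\<in>{j::nat. (2::nat) ^ j < N}. 2 ^ j)" by (rule sum_mono)
  then show "(\<Sum>j\<in>{j::nat. (2::nat) ^ j < N}. card (iv N j \<times> {X \<in> iv N j. fst X \<le> p \<and> p \<le> snd X})) \<le> 2 * N"
    using J_sum[of N] by linarith
qed

lemma nonsing_depth: "(a, b) \<in> iv N j \<Longrightarrow> 1 \<le> N \<Longrightarrow> a < b \<Longrightarrow> 2 ^ j < N"
proof -
  assume h: "(a, b) \<in> iv N j" "1 \<le> N" "a < b"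
  then have "(b - a) * 2 ^ j < N" using iv_len by blast
  moreover have "1 * 2 ^ j \<le> (b - a) * 2 ^ j" using h(3) by (intro mult_le_mono1) simp
  ultimately show ?thesis by linarith
qed

definition ff :: "(nat \<times> nat) \<times> (nat \<times> nat) \<Rightarrow> rect" where
  "ff XY = (fst (fst XY), snd (fst XY), fst (snd XY), snd (snd XY))"

lemma xcl: "card {m \<in> qnode N. fst m \<le> p \<and> p + 1 \<le> fst (snd m)} \<le> 2 * N"
proof -
  let ?J = "{j::nat. (2::nat) ^ j < N}"
  let ?A = "\<lambda>j. {X \<in> iv N j. fst X \<le> p \<and> p \<le> snd X}"
  have sub: "{m \<in> qnode N. fst m \<le> p \<and> p + 1 \<le> fst (snd m)} \<subseteq> ff ` (\<Union>j\<in>?J. ?A j \<times> iv N j)"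
  proof
    fix m assume m: "m \<in> {m \<in> qnode N. fst m \<le> p \<and> p + 1 \<le> fst (snd m)}"
    obtain a b c d where md: "m = (a, b, c, d)" by (cases m) auto
    have "(a, b, c, d) \<in> qnode N" using m md by simp
    from qnode_iv[OF this] obtain j where j: "(a, b) \<in> iv N j" "(c, d) \<in> iv N j" and N: "1 \<le> N"
      by blast
    have "2 ^ j < N" using nonsing_depth[OF j(1) N] m md by simp
    moreover have "((a, b), (c, d)) \<in> ?A j \<times> iv N j" using j m md by auto
    ultimately have mem: "((a, b), (c, d)) \<in> (\<Union>j\<in>?J. ?A j \<times> iv N j)" by (intro UN_I[of j]) auto
    show "m \<in> ff ` (\<Union>j\<in>?J. ?A j \<times> iv N j)"
      by (rule image_eqI[where x="((a, b), (c, d))"]) (simp add: md ff_def, rule mem)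
  qed
  have fin: "finite (\<Union>j\<in>?J. ?A j \<times> iv N j)"
    by (rule finite_UN_I[OF J_fin]) (simp add: iv_card)
  have "card {m \<in> qnode N. fst m \<le> p \<and> p + 1 \<le> fst (snd m)} \<le> card (ff ` (\<Union>j\<in>?J. ?A j \<times> iv N j))"
    by (rule card_mono[OF finite_imageI[OF fin] sub])
  also have "\<dots> \<le> card (\<Union>j\<in>?J. ?A j \<times> iv N j)" by (rule card_image_le[OF fin])
  also have "\<dots> \<le> (\<Sum>j\<in>?J. card (?A j \<times> iv N j))" by (rule card_UN_le[OF J_fin])
  also have "\<dots> \<le> 2 * N" by (rule cls_sum(1))
  finally show ?thesis .
qed

lemma ycl: "card {m \<in> qnode N. fst (snd (snd m)) \<le> p \<and> p + 1 \<le> snd (snd (snd m))} \<le> 2 * N"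
proof -
  let ?J = "{j::nat. (2::nat) ^ j < N}"
  let ?A = "\<lambda>j. {X \<in> iv N j. fst X \<le> p \<and> p \<le> snd X}"
  have sub: "{m \<in> qnode N. fst (snd (snd m)) \<le> p \<and> p + 1 \<le> snd (snd (snd m))} \<subseteq> ff ` (\<Union>j\<in>?J. iv N j \<times> ?A j)"
  proof
    fix m assume m: "m \<in> {m \<in> qnode N. fst (snd (snd m)) \<le> p \<and> p + 1 \<le> snd (snd (snd m))}"
    obtain a b c d where md: "m = (a, b, c, d)" by (cases m) auto
    have "(a, b, c, d) \<in> qnode N" using m md by simp
    from qnode_iv[OF this] obtain j where j: "(a, b) \<in> iv N j" "(c, d) \<in> iv N j" and N: "1 \<le> N"
      by blast
    have "2 ^ j < N" using nonsing_depth[OF j(2) N] m md by simp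
    moreover have "((a, b), (c, d)) \<in> iv N j \<times> ?A j" using j m md by auto
    ultimately have mem: "((a, b), (c, d)) \<in> (\<Union>j\<in>?J. iv N j \<times> ?A j)" by (intro UN_I[of j]) auto
    show "m \<in> ff ` (\<Union>j\<in>?J. iv N j \<times> ?A j)"
      by (rule image_eqI[where x="((a, b), (c, d))"]) (simp add: md ff_def, rule mem)
  qed
  have fin: "finite (\<Union>j\<in>?J. iv N j \<times> ?A j)"
    by (rule finite_UN_I[OF J_fin]) (simp add: iv_card)
  have "card {m \<in> qnode N. fst (snd (snd m)) \<le> p \<and> p + 1 \<le> snd (snd (snd m))} \<le> card (ff ` (\<Union>j\<in>?J. iv N j \<times> ?A j))"
    by (rule card_mono[OF finite_imageI[OF fin] sub])
  also have "\<dots> \<le> card (\<Union>j\<in>?J. iv N j \<times> ?A j)" by (rule card_image_le[OF fin])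
  also have "\<dots> \<le> (\<Sum>j\<in>?J. card (iv N j \<times> ?A j))" by (rule card_UN_le[OF J_fin])
  also have "\<dots> \<le> 2 * N" by (rule cls_sum(2))
  finally show ?thesis .
qed


definition Xc :: "nat \<Rightarrow> nat \<Rightarrow> rect set" where
  "Xc N p = {m \<in> qnode N. fst m \<le> p \<and> p + 1 \<le> fst (snd m)}"
definition Yc :: "nat \<Rightarrow> nat \<Rightarrow> rect set" where
  "Yc N p = {m \<in> qnode N. fst (snd (snd m)) \<le> p \<and> p + 1 \<le> snd (snd (snd m))}"
definition U :: "nat \<Rightarrow> nat \<Rightarrow> nat \<Rightarrow> nat \<Rightarrow> nat \<Rightarrow> rect set" where
  "U N x0 x1 y0 y1 = Xc N (x0 - 1) \<union> Xc N x1 \<union> Yc N (y0 - 1) \<union> Yc N y1"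

lemma U_fin: "finite (U N x0 x1 y0 y1)"
  unfolding U_def Xc_def Yc_def using qnode_fin by auto

lemma U_card: "card (U N x0 x1 y0 y1) \<le> 8 * N"
proof -
  have "card (U N x0 x1 y0 y1) \<le> card (Xc N (x0 - 1)) + card (Xc N x1) + card (Yc N (y0 - 1)) + card (Yc N y1)"
  proof -
    let ?a = "Xc N (x0 - 1)" and ?b = "Xc N x1" and ?c = "Yc N (y0 - 1)" and ?d = "Yc N y1"
    have "card (?a \<union> ?b \<union> ?c \<union> ?d) \<le> card (?a \<union> ?b \<union> ?c) + card ?d" by (rule card_Un_le)
    moreover have "card (?a \<union> ?b \<union> ?c) \<le> card (?a \<union> ?b) + card ?c" by (rule card_Un_le)
    moreover have "card (?a \<union> ?b) \<le> card ?a + card ?b" by (rule card_Un_le)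
    ultimately show ?thesis unfolding U_def by linarith
  qed
  moreover have "card (Xc N (x0 - 1)) \<le> 2 * N" "card (Xc N x1) \<le> 2 * N"
    "card (Yc N (y0 - 1)) \<le> 2 * N" "card (Yc N y1) \<le> 2 * N"
    unfolding Xc_def Yc_def by (rule xcl ycl)+
  ultimately show ?thesis by linarith
qed

lemma card2: "card {x, y} \<le> 2"
  by (cases "x = y") auto

definition kids :: "rect \<Rightarrow> rect set" where
  "kids P = (case P of (x0, x1, y0, y1) \<Rightarrow>
     ff ` ({(x0, (x0 + x1) div 2), ((x0 + x1) div 2 + 1, x1)} \<times> {(y0, (y0 + y1) div 2), ((y0 + y1) div 2 + 1, y1)}))"

lemma kids_card: "finite (kids P) \<and> card (kids P) \<le> 4"
proof -
  obtain x0 x1 y0 y1 where P: "P = (x0, x1, y0, y1)" by (cases P) auto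
  let ?S = "{(x0, (x0 + x1) div 2), ((x0 + x1) div 2 + 1, x1)}"
  let ?T = "{(y0, (y0 + y1) div 2), ((y0 + y1) div 2 + 1, y1)}"
  have "card (ff ` (?S \<times> ?T)) \<le> card (?S \<times> ?T)" by (rule card_image_le) simp
  also have "\<dots> = card ?S * card ?T" by (rule card_cartesian_product)
  also have "\<dots> \<le> 2 * 2" by (intro mult_le_mono card2)
  finally show ?thesis unfolding P kids_def by simp
qed

lemma cross:
  assumes "P \<in> qnode N" "cells P \<inter> cells (x0, x1, y0, y1) \<noteq> {}" "\<not> cells P \<subseteq> cells (x0, x1, y0, y1)"
  shows "P \<in> U N x0 x1 y0 y1"
proof -
  obtain a b c d where P: "P = (a, b, c, d)" by (cases P) auto
  from assms(2) obtain u v where uv: "a \<le> u" "u \<le> b" "c \<le> v" "v \<le> d" "x0 \<le> u" "u \<le> x1" "y0 \<le> v" "v \<le> y1"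
    unfolding P cells_def by auto
  from assms(3) obtain w where w: "w \<in> cells P" "w \<notin> cells (x0, x1, y0, y1)" by blast
  obtain u' v' where wd: "w = (u', v')" by (cases w) auto
  have uv': "a \<le> u'" "u' \<le> b" "c \<le> v'" "v' \<le> d"
     "u' < x0 \<or> x1 < u' \<or> v' < y0 \<or> y1 < v'"
    using w unfolding P wd cells_def by auto
  have q: "(a, b, c, d) \<in> qnode N" using assms(1) P by simp
  from uv'(5) show ?thesis
  proof (elim disjE)
    assume h: "u' < x0"
    have "a \<le> x0 - 1" "x0 - 1 + 1 \<le> b" using h uv uv' by linarith+
    then have "P \<in> Xc N (x0 - 1)" unfolding Xc_def P using q by simp
    then show ?thesis unfolding U_def by blast
  next
    assume h: "x1 < u'"
    have "a \<le> x1" "x1 + 1 \<le> b" using h uv uv' by linarith+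
    then have "P \<in> Xc N x1" unfolding Xc_def P using q by simp
    then show ?thesis unfolding U_def by blast
  next
    assume h: "v' < y0"
    have "c \<le> y0 - 1" "y0 - 1 + 1 \<le> d" using h uv uv' by linarith+
    then have "P \<in> Yc N (y0 - 1)" unfolding Yc_def P using q by simp
    then show ?thesis unfolding U_def by blast
  next
    assume h: "y1 < v'"
    have "c \<le> y1" "y1 + 1 \<le> d" using h uv uv' by linarith+
    then have "P \<in> Yc N y1" unfolding Yc_def P using q by simp
    then show ?thesis unfolding U_def by blast
  qed
qed

lemma cells_ne: "(a, b, c, d) \<in> qnode N \<Longrightarrow> (a, c) \<in> cells (a, b, c, d)"
  using qnode_bnd unfolding cells_def by auto

lemma main_sub:
  "qI N (cells (x0, x1, y0, y1)) \<subseteq> {(0::nat, N - 1, 0::nat, N - 1)} \<union> U N x0 x1 y0 y1 \<union> \<Union>(kids ` U N x0 x1 y0 y1)"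
proof
  fix m assume m: "m \<in> qI N (cells (x0, x1, y0, y1))"
  let ?B = "cells (x0, x1, y0, y1)"
  from m obtain n where mq: "m \<in> qnode N" and nS: "n \<in> qS N ?B" and nm: "cells n \<subseteq> cells m"
    unfolding qI_def by auto
  from nS have nq: "n \<in> qnode N" and nB: "cells n \<subseteq> ?B"
    and nmax: "\<And>m'. m' \<in> qnode N \<Longrightarrow> cells n \<subseteq> cells m' \<Longrightarrow> cells m' \<subseteq> ?B \<Longrightarrow> m' = n"
    unfolding qS_def by auto
  obtain na nb nc nd where nd: "n = (na, nb, nc, nd)" by (cases n) auto
  have nne: "(na, nc) \<in> cells n" using cells_ne nq nd by simp
  obtain a b c d where md: "m = (a, b, c, d)" by (cases m) auto
  show "m \<in> {(0::nat, N - 1, 0::nat, N - 1)} \<union> U N x0 x1 y0 y1 \<union> \<Union>(kids ` U N x0 x1 y0 y1)"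
  proof (cases "cells m \<subseteq> ?B")
    case False
    have "cells m \<inter> ?B \<noteq> {}" using nne nm nB by blast
    then show ?thesis using cross[OF mq _ False] by blast
  next
    case True
    have mn: "m = n" using nmax[OF mq nm True] .
    have mq': "(a, b, c, d) \<in> qnode N" using mq md by simp
    show ?thesis
    proof (cases rule: qnode.cases[OF mq'])
      case 1 then show ?thesis using md by simp
    next
      case (2 x0' x1' y0' y1' a0 a1 b0 b1)
      let ?P = "(x0', x1', y0', y1')"
      have pb: "x0' \<le> x1'" "y0' \<le> y1'" using qnode_bnd 2 by blast+
      have ax: "(a = x0' \<and> b = (x0' + x1') div 2) \<or> (a = (x0' + x1') div 2 + 1 \<and> b = x1')"
        using 2 by auto
      have cy: "(c = y0' \<and> d = (y0' + y1') div 2) \<or> (c = (y0' + y1') div 2 + 1 \<and> d = y1')"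
        using 2 by auto
      have m1: "x0' \<le> (x0' + x1') div 2" "(x0' + x1') div 2 \<le> x1'"
        "y0' \<le> (y0' + y1') div 2" "(y0' + y1') div 2 \<le> y1'" using pb by presburger+
      have bds: "x0' \<le> a" "b \<le> x1'" "y0' \<le> c" "d \<le> y1'" using ax cy m1 by linarith+
      have sub: "cells m \<subseteq> cells ?P" using bds unfolding md cells_def by auto
      have lt: "x0' < x1' \<or> y0' < y1'" using 2 by simp
      have m2: "x0' < x1' \<Longrightarrow> (x0' + x1') div 2 < x1'" "y0' < y1' \<Longrightarrow> (y0' + y1') div 2 < y1'"
        by presburger+
      have neq: "?P \<noteq> m"
      proof
        assume "?P = m"
        then have e: "a = x0'" "b = x1'" "c = y0'" "d = y1'" using md by auto
        show False using lt
        proof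
          assume "x0' < x1'" then show False using ax e m1 m2 by linarith
        next
          assume "y0' < y1'" then show False using cy e m1 m2 by linarith
        qed
      qed
      have notB: "\<not> cells ?P \<subseteq> ?B"
      proof
        assume "cells ?P \<subseteq> ?B"
        then have "?P = n" using nmax[of ?P] 2 sub nm by blast
        then show False using neq mn by simp
      qed
      have "cells ?P \<inter> ?B \<noteq> {}" using sub True nne nm by blast
      then have PU: "?P \<in> U N x0 x1 y0 y1" using cross 2 notB by blast
      have S: "(a, b) \<in> {(x0', (x0' + x1') div 2), ((x0' + x1') div 2 + 1, x1')}" using 2 by simp
      have T: "(c, d) \<in> {(y0', (y0' + y1') div 2), ((y0' + y1') div 2 + 1, y1')}" using 2 by simp
      have "m \<in> kids ?P" unfolding kids_def md prod.case
        by (rule image_eqI[where x="((a, b), (c, d))"]) (simp add: ff_def, rule SigmaI[OF S T])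
      then show ?thesis using PU by blast
    qed
  qed
qed

lemma card_qI: "card (qI N (cells (x0, x1, y0, y1))) \<le> 1 + 40 * N"
proof -
  let ?U = "U N x0 x1 y0 y1"
  have fin: "finite ({(0::nat, N - 1, 0::nat, N - 1)} \<union> ?U \<union> \<Union>(kids ` ?U))"
    using U_fin kids_card by auto
  have "card (qI N (cells (x0, x1, y0, y1))) \<le> card ({(0::nat, N - 1, 0::nat, N - 1)} \<union> ?U \<union> \<Union>(kids ` ?U))"
    by (rule card_mono[OF fin main_sub])
  also have "\<dots> \<le> card {(0::nat, N - 1, 0::nat, N - 1)} + card ?U + card (\<Union>(kids ` ?U))"
  proof -
    have "card ({(0::nat, N - 1, 0::nat, N - 1)} \<union> ?U \<union> \<Union>(kids ` ?U)) \<le> card ({(0::nat, N - 1, 0::nat, N - 1)} \<union> ?U) + card (\<Union>(kids ` ?U))"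
      by (rule card_Un_le)
    moreover have "card ({(0::nat, N - 1, 0::nat, N - 1)} \<union> ?U) \<le> card {(0::nat, N - 1, 0::nat, N - 1)} + card ?U" by (rule card_Un_le)
    ultimately show ?thesis by linarith
  qed
  also have "card (\<Union>(kids ` ?U)) \<le> (\<Sum>P\<in>?U. card (kids P))" by (rule card_UN_le[OF U_fin])
  also have "\<dots> \<le> (\<Sum>P\<in>?U. 4)" by (rule sum_mono) (simp add: kids_card)
  also have "\<dots> = 4 * card ?U" by simp
  finally have "card (qI N (cells (x0, x1, y0, y1))) \<le> 1 + 5 * card ?U" by simp
  then show ?thesis using U_card[of N x0 x1 y0 y1] by linarith
qed

theorem theorem2:
  shows "\<exists>C :: real. \<forall>N :: nat. \<forall>x0 x1 y0 y1 :: nat.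
           1 \<le> N \<longrightarrow> x0 \<le> x1 \<longrightarrow> x1 < N \<longrightarrow> y0 \<le> y1 \<longrightarrow> y1 < N \<longrightarrow>
           real (card (qI N (cells (x0, x1, y0, y1)))) \<le> C * real N"
proof (intro exI[of _ 41] allI impI)
  fix N x0 x1 y0 y1 :: nat
  assume N: "1 \<le> N"
  have "card (qI N (cells (x0, x1, y0, y1))) \<le> 41 * N" using card_qI[of N x0 x1 y0 y1] N by linarith
  then have "real (card (qI N (cells (x0, x1, y0, y1)))) \<le> real (41 * N)" by (rule of_nat_mono)
  then show "real (card (qI N (cells (x0, x1, y0, y1)))) \<le> 41 * real N" by simp
qed

end
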